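(* For every $n\ge1$, the coordinates $(p_j,u_j)$ of the trajectory $T_n$ satisfy $p_0>p_1>\dots>p_{n-1}>p_n=0$ and $0=u_0<u_1<\dots<u_n$.
   Context: $\Phi$ is the partial map of $\mathbb{R}^2$ defined for $p\ne0$ by $\Phi(p,u)=\bigl(p^2(u+1)-1,\ 1/p\bigr)$. For $n\ge1$, the trajectory $T_n$ is the (existing and unique) finite sequence $(p_j,u_j)$, $j=0,\dots,n$, with $(p_j,u_j)=\Phi(p_{j-1},u_{j-1})$ for $1\le j\le n$, $u_0=0$, $p_n=0$, and $p_j>0$ for $0\le j\le n-1$. *)

theory Defs
  imports Complex_Main
begin

text \<open>The partial map Phi, meant to be applied only for p \<noteq> 0.\<close>
definition Phi :: "real \<times> real \<Rightarrow> real \<times> real" where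
  "Phi pu = (let (p, u) = pu in (p^2 * (u + 1) - 1, 1 / p))"

definition is_trajectory :: "nat \<Rightarrow> (nat \<Rightarrow> real) \<Rightarrow> (nat \<Rightarrow> real) \<Rightarrow> bool" where
  "is_trajectory n p u \<longleftrightarrow>
     u 0 = 0 \<and> p n = 0 \<and> (\<forall>j<n. p j > 0) \<and>
     (\<forall>j. 1 \<le> j \<and> j \<le> n \<longrightarrow> (p j, u j) = Phi (p (j - 1), u (j - 1)))"

end

theory Submission
  imports Defs
begin

theorem lemma4:
  fixes n :: nat and p u :: "nat \<Rightarrow> real"
  assumes "n \<ge> 1" and "is_trajectory n p u"
  shows "(\<forall>j<n. p (Suc j) < p j) \<and> p n = 0 \<and> u 0 = 0 \<and> (\<forall>j<n. u j < u (Suc j))"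
proof -
  have u0: "u 0 = 0" and pn: "p n = 0" and pos: "\<And>j. j < n \<Longrightarrow> p j > 0"
    using assms(2) unfolding is_trajectory_def by auto
  have rec: "p (Suc j) = p j ^ 2 * (u j + 1) - 1 \<and> u (Suc j) = 1 / p j" if "j < n" for j
  proof -
    have "(p (Suc j), u (Suc j)) = Phi (p j, u j)"
      using assms(2) that unfolding is_trajectory_def by (metis Suc_leI diff_Suc_1 le_add1 plus_1_eq_Suc)
    then show ?thesis by (simp add: Phi_def)
  qed
  have recp: "p (Suc (Suc j)) = p (Suc j) ^ 2 * (1 / p j + 1) - 1" if "Suc j < n" for j
    using rec[of "Suc j"] rec[of j] that by auto
  have B: "\<And>m. k \<le> m \<Longrightarrow> m \<le> n \<Longrightarrow> 1 < p m \<and> p (m - 1) \<le> p m"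
    if k1: "1 \<le> k" and h: "1 < p k \<and> p (k - 1) \<le> p k" for k
  proof -
    fix m assume "k \<le> m" "m \<le> n"
    then show "1 < p m \<and> p (m - 1) \<le> p m"
    proof (induction m rule: dec_induct)
      case base then show ?case using h by simp
    next
      case (step m)
      then obtain j where j: "m = Suc j" using k1 by (cases m) auto
      have jn: "Suc j < n" using step j by simp
      have pj: "p j > 0" using pos jn by simp
      have ih: "1 < p (Suc j)" "p j \<le> p (Suc j)" using step j by auto
      have "1 / p (Suc j) \<le> 1 / p j" using pj ih by (simp add: frac_le)
      then have "p (Suc j) ^ 2 * (1 / p (Suc j) + 1) \<le> p (Suc j) ^ 2 * (1 / p j + 1)"
        by (simp add: mult_left_mono)
      moreover have "p (Suc j) ^ 2 * (1 / p (Suc j) + 1) = p (Suc j) + p (Suc j) ^ 2"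
        using ih by (simp add: power2_eq_square field_simps)
      moreover have "p (Suc j) ^ 2 > 1" using ih by (metis one_less_power zero_less_numeral pos2)
      ultimately have "p (Suc (Suc j)) > p (Suc j)" using recp[OF jn] by linarith
      then show ?case using j ih by simp
    qed
  qed
  have notB: "\<not> (1 < p k \<and> p (k - 1) \<le> p k)" if "1 \<le> k" "k \<le> n" for k
    using B[OF that(1) _ that(2) order_refl] pn by auto
  have dec: "p (Suc j) < p j" if "j < n" for j
    using that
  proof (induction j)
    case 0
    show ?case
    proof (rule ccontr)
      assume "\<not> ?thesis"
      hence ge: "p 0 \<le> p 1" by simp
      have p1: "p 1 = p 0 ^ 2 - 1" using rec[of 0] 0 u0 by simp
      have "p 0 > 0" using pos 0 by simp
      have "p 0 > 1"
      proof (rule ccontr)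
        assume "\<not> p 0 > 1"
        hence "p 0 ^ 2 \<le> 1" using \<open>p 0 > 0\<close> by (simp add: power_le_one)
        thus False using p1 ge \<open>p 0 > 0\<close> by linarith
      qed
      thus False using notB[of 1] 0 ge by simp
    qed
  next
    case (Suc j)
    have ih: "p (Suc j) < p j" using Suc by simp
    have pj: "p j > 0" and ps: "p (Suc j) > 0" using pos Suc by auto
    show ?case
    proof (cases "p (Suc j) \<le> 1")
      case True
      have "1 / p j < 1 / p (Suc j)" using ih ps by (simp add: frac_less2)
      hence "p (Suc j) ^ 2 * (1 / p j + 1) < p (Suc j) ^ 2 * (1 / p (Suc j) + 1)"
        using ps by simp
      moreover have "p (Suc j) ^ 2 * (1 / p (Suc j) + 1) = p (Suc j) + p (Suc j) ^ 2"
        using ps by (simp add: power2_eq_square field_simps)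
      moreover have "p (Suc j) ^ 2 \<le> 1" using True ps by (simp add: power_le_one)
      ultimately show ?thesis using recp[of j] Suc.prems by linarith
    next
      case False
      thus ?thesis using notB[of "Suc (Suc j)"] Suc.prems by force
    qed
  qed
  have inc: "u j < u (Suc j)" if "j < n" for j
  proof (cases j)
    case 0 thus ?thesis using rec[of 0] u0 pos that by simp
  next
    case (Suc i)
    have "u j = 1 / p i" "u (Suc j) = 1 / p j" using rec[of i] rec[of j] Suc that by auto
    moreover have "p j < p i" "p j > 0" using dec[of i] pos[of j] Suc that by auto
    ultimately show ?thesis by (simp add: frac_less2)
  qed
  show ?thesis using dec pn u0 inc by blast
qed

end
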